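(* Let $\mathbb{F}$ be a field of characteristic zero, $n\ge1$, $B\in\mathbb{F}^{n\times n}$ symmetric, and let $G=G(\mathbf 1,B)$ with twin-reduced graph $G'=G(a',B')$. Then $\Gamma(\mathbf 1,B)$ acts transitively on $G$ if and only if $\Gamma(a',B')$ acts transitively on $G'$; and $\Gamma(\mathbf 1,B)$ acts generously transitively on $G$ if and only if $\Gamma(a',B')$ acts generously transitively on $G'$.
   Context: $G(a,B)$ denotes the weighted graph on vertex set $[n]$ with vertex weights $a_i$ and edge weights $B_{i,j}$; $\mathbf 1$ is the all-ones vector. Vertices $i,j$ are twins if rows $i$ and $j$ of $B$ are equal; let $C_1,\dots,C_m$ be the twin equivalence classes. The twin-reduced graph $G(a',B')$ has vertex set $[m]$, vertex weights $a'_i=\sum_{j\in C_i}a_j$ (here $=|C_i|$), and $B'$ is obtained from $B$ by deleting, for each $i$, all but one of the rows and columns indexed by $C_i$. $\Gamma(a,B)$ is the group of permutations $\gamma$ of the vertex set with $a_{\gamma(i)}=a_i$ and $B_{\gamma(i),\gamma(j)}=B_{i,j}$ for all $i,j$. A permutation group $\Gamma$ acts generously transitively if for all vertices $u,v$ there is $\gamma\in\Gamma$ with $\gamma(u)=v$ and $\gamma(v)=u$. *)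

theory Defs
  imports "HOL-Analysis.Analysis" "HOL-Combinatorics.Permutations"
begin

text \<open>A weighted graph G(a,B) on vertex set [n] = {0..<n}: vertex weights a i,
 edge weights B i j (entries of the field), only the values for i, j < n matter.\<close>

definition Gamma :: "nat \<Rightarrow> (nat \<Rightarrow> 'a) \<Rightarrow> (nat \<Rightarrow> nat \<Rightarrow> 'a) \<Rightarrow> (nat \<Rightarrow> nat) set" where
  "Gamma n a B = {\<gamma>. \<gamma> permutes {0..<n} \<and> (\<forall>i<n. a (\<gamma> i) = a i) \<and>
                      (\<forall>i<n. \<forall>j<n. B (\<gamma> i) (\<gamma> j) = B i j)}"

definition acts_transitively :: "nat \<Rightarrow> (nat \<Rightarrow> nat) set \<Rightarrow> bool" where
  "acts_transitively n \<Gamma> \<longleftrightarrow> (\<forall>u<n. \<forall>v<n. \<exists>\<gamma>\<in>\<Gamma>. \<gamma> u = v)"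

definition acts_generously_transitively :: "nat \<Rightarrow> (nat \<Rightarrow> nat) set \<Rightarrow> bool" where
  "acts_generously_transitively n \<Gamma> \<longleftrightarrow>
     (\<forall>u<n. \<forall>v<n. \<exists>\<gamma>\<in>\<Gamma>. \<gamma> u = v \<and> \<gamma> v = u)"

definition twins :: "nat \<Rightarrow> (nat \<Rightarrow> nat \<Rightarrow> 'a) \<Rightarrow> nat \<Rightarrow> nat \<Rightarrow> bool" where
  "twins n B i j \<longleftrightarrow> (\<forall>k<n. B i k = B j k)"

definition twin_class :: "nat \<Rightarrow> (nat \<Rightarrow> nat \<Rightarrow> 'a) \<Rightarrow> nat \<Rightarrow> nat set" where
  "twin_class n B i = {j. j < n \<and> twins n B i j}"

definition twin_classes :: "nat \<Rightarrow> (nat \<Rightarrow> nat \<Rightarrow> 'a) \<Rightarrow> nat set set" where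
  "twin_classes n B = twin_class n B ` {0..<n}"

definition twin_reduced :: "nat \<Rightarrow> (nat \<Rightarrow> nat \<Rightarrow> 'a::semiring_1) \<Rightarrow> nat \<Rightarrow> (nat \<Rightarrow> 'a)
                            \<Rightarrow> (nat \<Rightarrow> nat \<Rightarrow> 'a) \<Rightarrow> bool" where
  "twin_reduced n B m a' B' \<longleftrightarrow>
     (\<exists>C r. bij_betw C {0..<m} (twin_classes n B) \<and> (\<forall>i<m. r i \<in> C i) \<and>
            (\<forall>i<m. a' i = of_nat (card (C i))) \<and>
            (\<forall>i<m. \<forall>j<m. B' i j = B (r i) (r j)))"

end

theory Submission
  imports Defs
begin

lemma perm_of_inj:
  assumes "finite S" "inj_on f S" "f ` S \<subseteq> S" "\<And>x. x \<notin> S \<Longrightarrow> f x = x"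
  shows "f permutes S"
proof -
  have "f ` S = S" using endo_inj_surj assms by blast
  hence "bij_betw f S S" using assms(2) by (simp add: bij_betw_def)
  thus ?thesis using assms(4) by (rule bij_imp_permutes)
qed

lemma pl: "p permutes {0..<k::nat} \<Longrightarrow> x < k \<Longrightarrow> p x < k"
proof -
  assume a: "p permutes {0..<k}" "x < k"
  have "x \<in> {0..<k}" using a by simp
  hence "p x \<in> {0..<k}" using permutes_in_image[OF a(1)] by blast
  thus ?thesis by simp
qed

locale TR =
  fixes n :: nat and B :: "nat \<Rightarrow> nat \<Rightarrow> 'a::field_char_0" and m :: nat
    and a' :: "nat \<Rightarrow> 'a" and B' :: "nat \<Rightarrow> nat \<Rightarrow> 'a" and C :: "nat \<Rightarrow> nat set" and r :: "nat \<Rightarrow> nat"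
  assumes symB: "\<forall>i<n. \<forall>j<n. B i j = B j i"
    and bijC: "bij_betw C {0..<m} (twin_classes n B)"
    and rC: "\<forall>i<m. r i \<in> C i"
    and aC: "\<forall>i<m. a' i = of_nat (card (C i))"
    and BC: "\<forall>i<m. \<forall>j<m. B' i j = B (r i) (r j)"
begin

lemma tw_refl: "twins n B x x" by (simp add: twins_def)
lemma tw_sym: "twins n B x y \<Longrightarrow> twins n B y x" by (simp add: twins_def)
lemma tw_trans: "twins n B x y \<Longrightarrow> twins n B y z \<Longrightarrow> twins n B x z" by (simp add: twins_def)

lemma C_class: "i < m \<Longrightarrow> \<exists>x<n. C i = twin_class n B x"
proof -
  assume "i < m"
  hence "C i \<in> C ` {0..<m}" by auto
  hence "C i \<in> twin_class n B ` {0..<n}" using bijC unfolding bij_betw_def twin_classes_def by simp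
  thus ?thesis by auto
qed

lemma mem_C: "i < m \<Longrightarrow> y \<in> C i \<Longrightarrow> y < n"
proof -
  assume a: "i < m" "y \<in> C i"
  then obtain z where "C i = twin_class n B z" using C_class by blast
  thus ?thesis using a(2) unfolding twin_class_def by simp
qed

lemma C_twins: "i < m \<Longrightarrow> x \<in> C i \<Longrightarrow> y \<in> C i \<Longrightarrow> twins n B x y"
proof -
  assume a: "i < m" "x \<in> C i" "y \<in> C i"
  then obtain z where "C i = twin_class n B z" using C_class by blast
  hence "twins n B z x" "twins n B z y" using a unfolding twin_class_def by auto
  thus ?thesis using tw_sym tw_trans by blast
qed

lemma C_full: "i < m \<Longrightarrow> x \<in> C i \<Longrightarrow> y < n \<Longrightarrow> twins n B x y \<Longrightarrow> y \<in> C i"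
proof -
  assume a: "i < m" "x \<in> C i" "y < n" "twins n B x y"
  then obtain z where z: "C i = twin_class n B z" using C_class by blast
  hence "twins n B z x" using a unfolding twin_class_def by auto
  hence "twins n B z y" using a(4) tw_trans by blast
  thus ?thesis using z a(3) unfolding twin_class_def by simp
qed

lemma cover: "x < n \<Longrightarrow> \<exists>i<m. x \<in> C i"
proof -
  assume "x < n"
  hence "twin_class n B x \<in> C ` {0..<m}" using bijC unfolding bij_betw_def twin_classes_def by auto
  moreover have "x \<in> twin_class n B x" using \<open>x<n\<close> by (simp add: twin_class_def tw_refl)
  ultimately show ?thesis by auto
qed

lemma uniq: "i < m \<Longrightarrow> j < m \<Longrightarrow> x \<in> C i \<Longrightarrow> x \<in> C j \<Longrightarrow> i = j"
proof -
  assume a: "i < m" "j < m" "x \<in> C i" "x \<in> C j"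
  have "C i = C j"
  proof (intro set_eqI iffI)
    fix y assume "y \<in> C i"
    thus "y \<in> C j" using C_full[of j x y] C_twins[of i x y] mem_C[of i y] a by blast
  next
    fix y assume "y \<in> C j"
    thus "y \<in> C i" using C_full[of i x y] C_twins[of j x y] mem_C[of j y] a by blast
  qed
  thus ?thesis using bijC a unfolding bij_betw_def inj_on_def by auto
qed

definition cls where "cls x = (THE i. i < m \<and> x \<in> C i)"

lemma cls: "x < n \<Longrightarrow> cls x < m \<and> x \<in> C (cls x)"
proof -
  assume "x < n"
  hence "\<exists>!i. i < m \<and> x \<in> C i" using cover uniq by blast
  thus ?thesis unfolding cls_def by (rule theI')
qed

lemma cls_eq: "i < m \<Longrightarrow> x \<in> C i \<Longrightarrow> cls x = i"
proof -
  assume a: "i < m" "x \<in> C i"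
  have "x < n" using mem_C a by blast
  thus ?thesis using cls[of x] uniq[of i "cls x" x] a by auto
qed

lemma twins_iff: "x < n \<Longrightarrow> y < n \<Longrightarrow> twins n B x y \<longleftrightarrow> cls x = cls y"
proof
  assume "x < n" "y < n" "twins n B x y"
  thus "cls x = cls y" using cls[of x] C_full[of "cls x" x y] cls_eq[of "cls x" y] by auto
next
  assume "x < n" "y < n" "cls x = cls y"
  thus "twins n B x y" using cls[of x] cls[of y] C_twins[of "cls x" x y] by auto
qed

lemma Bcong: "x < n \<Longrightarrow> y < n \<Longrightarrow> x' < n \<Longrightarrow> y' < n \<Longrightarrow> twins n B x x' \<Longrightarrow> twins n B y y'
   \<Longrightarrow> B x y = B x' y'"
proof -
  assume a: "x < n" "y < n" "x' < n" "y' < n" "twins n B x x'" "twins n B y y'"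
  have "B x y = B x' y" using a by (simp add: twins_def)
  also have "\<dots> = B y x'" using symB a by auto
  also have "\<dots> = B y' x'" using a by (simp add: twins_def)
  also have "\<dots> = B x' y'" using symB a by auto
  finally show ?thesis .
qed

lemma r_lt: "i < m \<Longrightarrow> r i < n" using rC mem_C by blast
lemma cls_r: "i < m \<Longrightarrow> cls (r i) = i" using rC cls_eq by blast

lemma B_eq: "x < n \<Longrightarrow> y < n \<Longrightarrow> B x y = B' (cls x) (cls y)"
proof -
  assume a: "x < n" "y < n"
  have cx: "cls x < m" "cls y < m" using cls a by auto
  have e1: "B' (cls x) (cls y) = B (r (cls x)) (r (cls y))" using BC cx by blast
  have rl: "r (cls x) < n" "r (cls y) < n" using r_lt cx by auto
  have "twins n B (r (cls x)) x" "twins n B (r (cls y)) y"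
    using twins_iff[OF rl(1) a(1)] twins_iff[OF rl(2) a(2)] cls_r cx by auto
  hence "B (r (cls x)) (r (cls y)) = B x y" using Bcong[OF rl a] by blast
  thus ?thesis using e1 by simp
qed

lemma finC: "i < m \<Longrightarrow> finite (C i)"
  using mem_C by (meson finite_nat_set_iff_bounded)

lemma swapG: "x < n \<Longrightarrow> y < n \<Longrightarrow> twins n B x y \<Longrightarrow> Transposition.transpose x y \<in> Gamma n (\<lambda>_. 1) B"
proof -
  assume a: "x < n" "y < n" "twins n B x y"
  have t: "i < n \<Longrightarrow> Transposition.transpose x y i < n \<and> twins n B (Transposition.transpose x y i) i" for i
    using a by (auto simp: Transposition.transpose_def tw_refl tw_sym)
  have "B (Transposition.transpose x y i) (Transposition.transpose x y j) = B i j" if "i < n" "j < n" for i j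
    using Bcong[of "Transposition.transpose x y i" "Transposition.transpose x y j" i j] t that by blast
  moreover have "Transposition.transpose x y permutes {0..<n}" using a by (intro permutes_swap_id) auto
  ultimately show ?thesis unfolding Gamma_def by auto
qed

lemma compG: "g \<in> Gamma n (\<lambda>_. 1) B \<Longrightarrow> h \<in> Gamma n (\<lambda>_. 1) B \<Longrightarrow> g \<circ> h \<in> Gamma n (\<lambda>_. 1) B"
proof -
  assume g: "g \<in> Gamma n (\<lambda>_. 1) B" and h: "h \<in> Gamma n (\<lambda>_. 1) B"
  have gp: "g permutes {0..<n}" and hp: "h permutes {0..<n}" using g h by (auto simp: Gamma_def)
  have hl: "i < n \<Longrightarrow> h i < n" for i using hp by (rule pl)
  have "B (g (h i)) (g (h j)) = B i j" if "i < n" "j < n" for i j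
    using g h hl that by (auto simp: Gamma_def)
  thus ?thesis unfolding Gamma_def using permutes_compose[OF hp gp] by auto
qed

lemma G_pres: assumes g: "g \<in> Gamma n (\<lambda>_. 1) B" and x: "x < n" "y < n"
  shows "twins n B (g x) (g y) \<longleftrightarrow> twins n B x y"
proof -
  have p: "g permutes {0..<n}" and bb: "\<forall>i<n. \<forall>j<n. B (g i) (g j) = B i j" using g by (auto simp: Gamma_def)
  show ?thesis
  proof
    assume t: "twins n B (g x) (g y)"
    show "twins n B x y" unfolding twins_def
    proof (intro allI impI)
      fix k assume "k < n"
      hence "g k < n" using p by (simp add: pl)
      thus "B x k = B y k" using t bb x \<open>k<n\<close> unfolding twins_def by metis
    qed
  next
    assume t: "twins n B x y"
    show "twins n B (g x) (g y)" unfolding twins_def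
    proof (intro allI impI)
      fix k assume "k < n"
      hence "k \<in> g ` {0..<n}" using permutes_image[OF p] by simp
      then obtain k' where "k' < n" "g k' = k" by auto
      thus "B (g x) k = B (g y) k" using t bb x unfolding twins_def by metis
    qed
  qed
qed

lemma G_lt: "g \<in> Gamma n (\<lambda>_. 1) B \<Longrightarrow> x < n \<Longrightarrow> g x < n"
  by (auto simp: Gamma_def pl)

lemma induced:
  assumes g: "g \<in> Gamma n (\<lambda>_. 1) B"
  defines "s \<equiv> (\<lambda>i. if i < m then cls (g (r i)) else i)"
  shows "s \<in> Gamma m a' B'" "\<And>i. i < m \<Longrightarrow> s i = cls (g (r i))"
proof -
  show si: "\<And>i. i < m \<Longrightarrow> s i = cls (g (r i))" by (simp add: s_def)
  have sl: "i < m \<Longrightarrow> s i < m" for i using si cls G_lt[OF g] r_lt by auto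
  have inj: "inj_on s {0..<m}"
  proof (rule inj_onI)
    fix i j assume "i \<in> {0..<m}" "j \<in> {0..<m}" "s i = s j"
    hence ij: "i < m" "j < m" "cls (g (r i)) = cls (g (r j))" using si by auto
    hence "twins n B (g (r i)) (g (r j))" using twins_iff G_lt[OF g] r_lt by auto
    hence "twins n B (r i) (r j)" using G_pres[OF g] r_lt ij by auto
    hence "cls (r i) = cls (r j)" using twins_iff r_lt ij by blast
    thus "i = j" using cls_r ij by simp
  qed
  have perm: "s permutes {0..<m}"
    by (rule perm_of_inj) (use inj sl in \<open>auto simp: s_def\<close>)
  have img: "g ` C i = C (s i)" if i: "i < m" for i
  proof (intro set_eqI iffI)
    fix y assume "y \<in> g ` C i"
    then obtain x where x: "x \<in> C i" "y = g x" by auto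
    have xn: "x < n" using mem_C x i by blast
    have ri: "r i < n" using r_lt i by blast
    have gx: "g x < n" "g (r i) < n" using G_lt[OF g] xn ri by auto
    have "twins n B x (r i)" using C_twins x rC i by auto
    hence "twins n B (g x) (g (r i))" using G_pres[OF g xn ri] by simp
    hence "cls (g x) = s i" using twins_iff[OF gx] si[OF i] by simp
    thus "y \<in> C (s i)" using cls[OF gx(1)] x by simp
  next
    fix y assume y: "y \<in> C (s i)"
    have yn: "y < n" using mem_C y sl i by blast
    have ri: "r i < n" using r_lt i by blast
    have p: "g permutes {0..<n}" using g by (auto simp: Gamma_def)
    have "y \<in> g ` {0..<n}" using permutes_image[OF p] yn by simp
    then obtain x where x: "x < n" "g x = y" by auto
    have gx: "g x < n" "g (r i) < n" using G_lt[OF g] x ri by auto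
    have "cls y = s i" using cls_eq[OF sl[OF i] y] .
    hence "cls (g x) = cls (g (r i))" using x si[OF i] by simp
    hence "twins n B (g x) (g (r i))" using twins_iff[OF gx] by simp
    hence "twins n B x (r i)" using G_pres[OF g x(1) ri] by simp
    hence "x \<in> C i" using C_full[of i "r i" x] rC i x tw_sym by blast
    thus "y \<in> g ` C i" using x by auto
  qed
  have ginj: "inj_on g A" for A using g permutes_inj_on unfolding Gamma_def by blast
  have card: "card (C (s i)) = card (C i)" if "i < m" for i
    using img[OF that] card_image[OF ginj, of "C i"] by simp
  have Bs: "B' (s i) (s j) = B' i j" if "i < m" "j < m" for i j
  proof -
    have "B' (s i) (s j) = B (g (r i)) (g (r j))"
      using B_eq[of "g (r i)" "g (r j)"] G_lt[OF g] r_lt that si by auto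
    also have "\<dots> = B (r i) (r j)" using g r_lt that by (auto simp: Gamma_def)
    finally show ?thesis using BC that by auto
  qed
  show "s \<in> Gamma m a' B'" unfolding Gamma_def using perm card Bs aC sl by auto
qed

lemma lift:
  assumes s: "s \<in> Gamma m a' B'"
  shows "\<exists>g\<in>Gamma n (\<lambda>_. 1) B. \<forall>x<n. cls (g x) = s (cls x)"
proof -
  have sp: "s permutes {0..<m}" and sa: "\<forall>i<m. a' (s i) = a' i" and sb: "\<forall>i<m. \<forall>j<m. B' (s i) (s j) = B' i j"
    using s by (auto simp: Gamma_def)
  have sl: "i < m \<Longrightarrow> s i < m" for i using sp by (rule pl)
  have "\<forall>i<m. \<exists>f. bij_betw f (C i) (C (s i))"
  proof (intro allI impI)
    fix i assume i: "i < m"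
    have "card (C i) = card (C (s i))" using aC sa i sl by (metis of_nat_eq_iff)
    thus "\<exists>f. bij_betw f (C i) (C (s i))" using finite_same_card_bij finC i sl by blast
  qed
  then obtain f where f: "\<And>i. i < m \<Longrightarrow> bij_betw (f i) (C i) (C (s i))" by metis
  define g where "g x = (if x < n then f (cls x) x else x)" for x
  have gC: "x < n \<Longrightarrow> g x \<in> C (s (cls x))" for x
    using f cls unfolding g_def bij_betw_def by auto
  have gl: "x < n \<Longrightarrow> g x < n" for x using gC mem_C sl cls by blast
  have gc: "x < n \<Longrightarrow> cls (g x) = s (cls x)" for x using gC cls_eq sl cls by blast
  have inj: "inj_on g {0..<n}"
  proof (rule inj_onI)
    fix x y assume "x \<in> {0..<n}" "y \<in> {0..<n}" "g x = g y"
    hence xy: "x < n" "y < n" "g x = g y" by auto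
    hence "s (cls x) = s (cls y)" using gc by metis
    hence e: "cls x = cls y" using permutes_inj[OF sp] by (auto dest: injD)
    have "f (cls x) x = f (cls x) y" using xy e unfolding g_def by auto
    thus "x = y" using f[of "cls x"] cls xy e unfolding bij_betw_def inj_on_def by metis
  qed
  have perm: "g permutes {0..<n}"
    by (rule perm_of_inj) (use inj gl in \<open>auto simp: g_def\<close>)
  have "g \<in> Gamma n (\<lambda>_. 1) B" unfolding Gamma_def
    using perm B_eq gl gc sb cls by auto
  thus ?thesis using gc by auto
qed

lemma trans_iff: "acts_transitively n (Gamma n (\<lambda>_. 1) B) \<longleftrightarrow> acts_transitively m (Gamma m a' B')"
proof
  assume T: "acts_transitively n (Gamma n (\<lambda>_. 1) B)"
  show "acts_transitively m (Gamma m a' B')" unfolding acts_transitively_def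
  proof (intro allI impI)
    fix u v assume uv: "u < m" "v < m"
    then obtain g where g: "g \<in> Gamma n (\<lambda>_. 1) B" "g (r u) = r v"
      using T r_lt unfolding acts_transitively_def by blast
    note I = induced[OF g(1)]
    have "cls (g (r u)) = v" using g(2) cls_r uv by simp
    thus "\<exists>\<gamma>\<in>Gamma m a' B'. \<gamma> u = v" using I(1) I(2)[OF uv(1)] by auto
  qed
next
  assume T: "acts_transitively m (Gamma m a' B')"
  show "acts_transitively n (Gamma n (\<lambda>_. 1) B)" unfolding acts_transitively_def
  proof (intro allI impI)
    fix x y assume xy: "x < n" "y < n"
    then obtain s where s: "s \<in> Gamma m a' B'" "s (cls x) = cls y"
      using T cls unfolding acts_transitively_def by blast
    obtain g where g: "g \<in> Gamma n (\<lambda>_. 1) B" "\<forall>x<n. cls (g x) = s (cls x)" using lift[OF s(1)] by blast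
    have tw: "twins n B (g x) y" using twins_iff[OF G_lt[OF g(1) xy(1)] xy(2)] g(2) s(2) xy(1) by simp
    have "g x < n" using G_lt[OF g(1) xy(1)] .
    hence "Transposition.transpose (g x) y \<in> Gamma n (\<lambda>_. 1) B" using swapG tw xy by blast
    hence "Transposition.transpose (g x) y \<circ> g \<in> Gamma n (\<lambda>_. 1) B"
      using compG g(1) by blast
    moreover have "(Transposition.transpose (g x) y \<circ> g) x = y" by simp
    ultimately show "\<exists>\<gamma>\<in>Gamma n (\<lambda>_. 1) B. \<gamma> x = y" by blast
  qed
qed

lemma gen_iff: "acts_generously_transitively n (Gamma n (\<lambda>_. 1) B) \<longleftrightarrow> acts_generously_transitively m (Gamma m a' B')"
proof
  assume T: "acts_generously_transitively n (Gamma n (\<lambda>_. 1) B)"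
  show "acts_generously_transitively m (Gamma m a' B')" unfolding acts_generously_transitively_def
  proof (intro allI impI)
    fix u v assume uv: "u < m" "v < m"
    then obtain g where g: "g \<in> Gamma n (\<lambda>_. 1) B" "g (r u) = r v" "g (r v) = r u"
      using T r_lt unfolding acts_generously_transitively_def by blast
    note I = induced[OF g(1)]
    have "cls (g (r u)) = v" "cls (g (r v)) = u" using g(2,3) cls_r uv by simp_all
    thus "\<exists>\<gamma>\<in>Gamma m a' B'. \<gamma> u = v \<and> \<gamma> v = u" using I(1) I(2)[OF uv(1)] I(2)[OF uv(2)] by auto
  qed
next
  assume T: "acts_generously_transitively m (Gamma m a' B')"
  show "acts_generously_transitively n (Gamma n (\<lambda>_. 1) B)" unfolding acts_generously_transitively_def
  proof (intro allI impI)
    fix x y assume xy: "x < n" "y < n"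
    show "\<exists>\<gamma>\<in>Gamma n (\<lambda>_. 1) B. \<gamma> x = y \<and> \<gamma> y = x"
    proof (cases "cls x = cls y")
      case True
      hence "Transposition.transpose x y \<in> Gamma n (\<lambda>_. 1) B" using swapG twins_iff xy by auto
      moreover have "Transposition.transpose x y x = y" "Transposition.transpose x y y = x" by simp_all
      ultimately show ?thesis by blast
    next
      case False
      obtain s where s: "s \<in> Gamma m a' B'" "s (cls x) = cls y" "s (cls y) = cls x"
        using T cls xy unfolding acts_generously_transitively_def by blast
      obtain g where g: "g \<in> Gamma n (\<lambda>_. 1) B" "\<forall>x<n. cls (g x) = s (cls x)" using lift[OF s(1)] by blast
      define z where "z = g x"
      define w where "w = g y"
      have zn: "z < n" "w < n" using G_lt g xy z_def w_def by auto
      have cz: "cls z = cls y" "cls w = cls x" using g s xy z_def w_def by auto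
      have tw: "twins n B z y" "twins n B w x" using twins_iff cz zn xy by auto
      have ne: "y \<noteq> w" "y \<noteq> x" "w \<noteq> z" using cz False by auto
      have "Transposition.transpose w x \<in> Gamma n (\<lambda>_. 1) B" using swapG[OF zn(2) xy(1) tw(2)] .
      moreover have "Transposition.transpose z y \<in> Gamma n (\<lambda>_. 1) B" using swapG[OF zn(1) xy(2) tw(1)] .
      ultimately have "Transposition.transpose w x \<circ> (Transposition.transpose z y \<circ> g) \<in> Gamma n (\<lambda>_. 1) B"
        using compG g(1) by blast
      moreover have "(Transposition.transpose w x \<circ> (Transposition.transpose z y \<circ> g)) x = y"
        using ne by (simp add: z_def[symmetric] Transposition.transpose_def)
      moreover have "(Transposition.transpose w x \<circ> (Transposition.transpose z y \<circ> g)) y = x"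
        using ne by (simp add: w_def[symmetric] Transposition.transpose_def)
      ultimately show ?thesis by blast
    qed
  qed
qed

end

theorem lemma3p1:
  fixes B :: "nat \<Rightarrow> nat \<Rightarrow> 'a::field_char_0"
    and n m :: nat and a' :: "nat \<Rightarrow> 'a" and B' :: "nat \<Rightarrow> nat \<Rightarrow> 'a"
  assumes "n \<ge> 1"
    and "\<forall>i<n. \<forall>j<n. B i j = B j i"
    and "twin_reduced n B m a' B'"
  shows "(acts_transitively n (Gamma n (\<lambda>_. 1) B) \<longleftrightarrow> acts_transitively m (Gamma m a' B'))
       \<and> (acts_generously_transitively n (Gamma n (\<lambda>_. 1) B)
            \<longleftrightarrow> acts_generously_transitively m (Gamma m a' B'))"
proof -
  obtain C r where "bij_betw C {0..<m} (twin_classes n B)" "\<forall>i<m. r i \<in> C i"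
    "\<forall>i<m. a' i = of_nat (card (C i))" "\<forall>i<m. \<forall>j<m. B' i j = B (r i) (r j)"
    using assms(3) unfolding twin_reduced_def by blast
  then interpret TR n B m a' B' C r using assms(2) by unfold_locales auto
  show ?thesis using trans_iff gen_iff by blast
qed

end
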